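(* Let $G$ be the reflexive transitive closure of a branching on vertex set $[n]$, with adjacency matrix $M\in\{0,1\}^{n\times n}$ ($M_{j,i}=1$ iff $(i,j)$ is an edge of $G$), accessible only through a matrix-vector oracle $q\mapsto Mq$ over $GF(2)$. Consider the following procedure: initialize $lvl[v]=0$ for all $v\in[n]$ and $q=\mathbf{1}$ (all-ones vector); for $i=0,1,\ldots,\lceil\log_2 n\rceil-1$: query $r:=(Mq)\oplus q$, for every $v$ with $r_v=1$ set $lvl[v]\gets lvl[v]+2^i$, and then set $q\gets q\odot r$ (coordinatewise product). Then this procedure uses $O(\log n)$ queries and at termination $lvl[v]$ equals the level of $v$ for every vertex $v\in[n]$.
   Context: A branching is a forest of rooted trees with all edges directed away from the roots. Its reflexive transitive closure adds an edge $(u,w)$ whenever $w$ is reachable from $u$ (including a loop $(u,u)$ at every vertex). The level of a vertex is its depth in the underlying branching: roots are on level $0$, and children of a vertex on level $\ell$ are on level $\ell+1$. All arithmetic is over $GF(2)$; $\oplus$ is xor and $\odot$ is coordinatewise multiplication (and). *)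

theory Defs
  imports Complex_Main "HOL-Library.Z2"
begin

text \<open>Vertex set [n] is rendered as {0..<n}.\<close>

definition branching :: "nat \<Rightarrow> (nat \<times> nat) set \<Rightarrow> bool" where
  "branching n E \<longleftrightarrow> E \<subseteq> {..<n} \<times> {..<n} \<and> acyclic E \<and>
     (\<forall>v. \<forall>u w. (u, v) \<in> E \<and> (w, v) \<in> E \<longrightarrow> u = w)"

inductive has_level :: "nat \<Rightarrow> (nat \<times> nat) set \<Rightarrow> nat \<Rightarrow> nat \<Rightarrow> bool"
  for n E where
  root: "v < n \<Longrightarrow> (\<forall>u. (u, v) \<notin> E) \<Longrightarrow> has_level n E v 0"
| child: "has_level n E u l \<Longrightarrow> (u, v) \<in> E \<Longrightarrow> has_level n E v (Suc l)"

definition level :: "nat \<Rightarrow> (nat \<times> nat) set \<Rightarrow> nat \<Rightarrow> nat" where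
  "level n E v = (THE l. has_level n E v l)"

definition adj_closure :: "nat \<Rightarrow> (nat \<times> nat) set \<Rightarrow> nat \<Rightarrow> nat \<Rightarrow> bit" where
  "adj_closure n E j i = (if i < n \<and> j < n \<and> (i, j) \<in> E\<^sup>* then 1 else 0)"

definition matvec :: "nat \<Rightarrow> (nat \<Rightarrow> nat \<Rightarrow> bit) \<Rightarrow> (nat \<Rightarrow> bit) \<Rightarrow> nat \<Rightarrow> bit" where
  "matvec n M q = (\<lambda>j. \<Sum>i<n. M j i * q i)"

text \<open>The procedure, with access to M only through an oracle
  orc : q \<mapsto> M q.  State = (lvl, q, number of oracle queries made).
  run orc k s performs iterations i = 0, ..., k-1.\<close>

fun run :: "((nat \<Rightarrow> bit) \<Rightarrow> (nat \<Rightarrow> bit)) \<Rightarrow> nat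
            \<Rightarrow> (nat \<Rightarrow> nat) \<times> (nat \<Rightarrow> bit) \<times> nat
            \<Rightarrow> (nat \<Rightarrow> nat) \<times> (nat \<Rightarrow> bit) \<times> nat" where
  "run orc 0 s = s"
| "run orc (Suc i) s =
     (case run orc i s of (lvl, q, c) \<Rightarrow>
        (let r = (\<lambda>v. orc q v + q v) in
          (\<lambda>v. lvl v + (if r v = 1 then 2 ^ i else 0),
           \<lambda>v. q v * r v,
           Suc c)))"

definition procedure :: "((nat \<Rightarrow> bit) \<Rightarrow> (nat \<Rightarrow> bit)) \<Rightarrow> nat
            \<Rightarrow> (nat \<Rightarrow> nat) \<times> (nat \<Rightarrow> bit) \<times> nat" where
  "procedure orc n = run orc (nat \<lceil>log 2 (real n)\<rceil>) (\<lambda>_. 0, \<lambda>_. 1, 0)"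

end

theory Submission
  imports Defs
begin

lemma of_nat_bit: "(of_nat k :: bit) = (if odd k then 1 else 0)"
proof (cases "odd k")
  case True
  then have "odd (of_nat k :: bit)" by (metis even_of_nat_iff)
  then have "(of_nat k :: bit) \<noteq> 0" by (metis even_zero)
  then show ?thesis using True by (metis bit_not_zero_iff)
next
  case False
  then have "even (of_nat k :: bit)" by (metis even_of_nat_iff)
  then have "(of_nat k :: bit) \<noteq> 1" by (metis odd_one)
  then show ?thesis using False by (metis bit_not_one_iff)
qed

lemma has_level_lt:
  assumes B: "branching n E" and h: "has_level n E v l" shows "v < n"
  using h
proof induction
  case (root v) then show ?case by simp
next
  case (child u l v) then show ?case using B unfolding branching_def by auto
qed

lemma has_level_unique:
  assumes B: "branching n E" and h: "has_level n E v l" and h2: "has_level n E v l'"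
  shows "l = l'"
  using h h2
proof (induction arbitrary: l')
  case (root v)
  from root.prems show ?case by (cases rule: has_level.cases) (use root.hyps in auto)
next
  case (child u l v)
  from child.prems show ?case
  proof (cases rule: has_level.cases)
    case root then show ?thesis using child.hyps by auto
  next
    case (child u' l2)
    then have "u' = u" using B \<open>(u, v) \<in> E\<close> unfolding branching_def by blast
    then show ?thesis using child.IH child by auto
  qed
qed

lemma has_level_exists:
  assumes B: "branching n E" and v: "v < n" shows "\<exists>l. has_level n E v l"
proof -
  have fin: "finite E" using B unfolding branching_def
    by (meson finite_SigmaI finite_lessThan finite_subset)
  have "wf E" using B fin finite_acyclic_wf unfolding branching_def by blast
  then show ?thesis using v
  proof (induction v rule: wf_induct_rule)
    case (less x)
    show ?case
    proof (cases "\<exists>u. (u, x) \<in> E")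
      case True
      then obtain u where u: "(u, x) \<in> E" by blast
      then have "u < n" using B unfolding branching_def by auto
      then obtain l where "has_level n E u l" using less.IH u by blast
      then show ?thesis using u has_level.child by blast
    next
      case False
      then show ?thesis using less.prems has_level.root by blast
    qed
  qed
qed

lemma level_eq:
  assumes B: "branching n E" and h: "has_level n E v l" shows "level n E v = l"
  unfolding level_def by (rule the_equality[of "has_level n E v" l, OF h]) (use has_level_unique[OF B h] in auto)

lemma level_has:
  assumes B: "branching n E" and v: "v < n" shows "has_level n E v (level n E v)"
  using has_level_exists[OF B v] level_eq[OF B] by metis

lemma anc_bij:
  assumes B: "branching n E" and h: "has_level n E v d"
  shows "bij_betw (level n E) {u. (u, v) \<in> E\<^sup>*} {..d}"
  using h
proof induction
  case (root v)
  have "{u. (u, v) \<in> E\<^sup>*} = {v}"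
    using root.hyps(2) by (auto elim: rtranclE)
  moreover have "level n E v = 0" using level_eq[OF B has_level.root[OF root.hyps]] .
  ultimately show ?case by (simp add: bij_betw_def)
next
  case (child u l v)
  have A: "{u'. (u', v) \<in> E\<^sup>*} = {u'. (u', u) \<in> E\<^sup>*} \<union> {v}"
  proof
    show "{u'. (u', v) \<in> E\<^sup>*} \<subseteq> {u'. (u', u) \<in> E\<^sup>*} \<union> {v}"
    proof
      fix w assume "w \<in> {u'. (u', v) \<in> E\<^sup>*}"
      then have "(w, v) \<in> E\<^sup>*" by simp
      then show "w \<in> {u'. (u', u) \<in> E\<^sup>*} \<union> {v}"
      proof (cases rule: rtranclE)
        case base then show ?thesis by simp
      next
        case (step y)
        then have "y = u" using B child.hyps(2) unfolding branching_def by blast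
        then show ?thesis using step by simp
      qed
    qed
    show "{u'. (u', u) \<in> E\<^sup>*} \<union> {v} \<subseteq> {u'. (u', v) \<in> E\<^sup>*}"
      using child.hyps(2) by (auto intro: rtrancl_into_rtrancl)
  qed
  have nv: "v \<notin> {u'. (u', u) \<in> E\<^sup>*}"
  proof
    assume "v \<in> {u'. (u', u) \<in> E\<^sup>*}"
    then have "(v, v) \<in> E\<^sup>+" using child.hyps(2) by (simp add: rtrancl_into_trancl1)
    then show False using B unfolding branching_def acyclic_def by blast
  qed
  have lv: "level n E v = Suc l" using level_eq[OF B has_level.child[OF child.hyps]] .
  have "{..Suc l} = {..l} \<union> {Suc l}" by auto
  then show ?case using A nv lv child.IH notIn_Un_bij_betw[of v _ "level n E" "{..l}"] by simp
qed

lemma anc_sub: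
  assumes B: "branching n E" and v: "v < n"
  shows "{u. (u, v) \<in> E\<^sup>*} \<subseteq> {..<n}"
proof
  fix u assume "u \<in> {u. (u, v) \<in> E\<^sup>*}"
  then have "(u, v) \<in> E\<^sup>*" by simp
  then show "u \<in> {..<n}"
    by (cases rule: rtranclE) (use v B in \<open>auto simp: branching_def dest: rtranclD tranclD\<close>)
qed

lemma matvec_level:
  assumes B: "branching n E" and v: "v < n"
    and q: "\<And>u. u < n \<Longrightarrow> q u = of_bool (P (level n E u))"
  shows "matvec n (adj_closure n E) q v = of_nat (card ({..level n E v} \<inter> {j. P j}))"
proof -
  let ?A = "{u. (u, v) \<in> E\<^sup>*}"
  have sub: "?A \<subseteq> {..<n}" using anc_sub[OF B v] .
  have "matvec n (adj_closure n E) q v = (\<Sum>i<n. if i \<in> ?A then q i else 0)"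
    unfolding matvec_def adj_closure_def using v by (intro sum.cong) auto
  also have "\<dots> = sum q ({..<n} \<inter> ?A)"
    by (rule sum.inter_restrict[symmetric]) simp
  also have "{..<n} \<inter> ?A = ?A" using sub by blast
  also have "sum q ?A = (\<Sum>u\<in>?A. of_bool (P (level n E u)))"
    using sub q by (intro sum.cong) auto
  also have "\<dots> = (\<Sum>j\<in>{..level n E v}. of_bool (P j))"
    using anc_bij[OF B level_has[OF B v]] by (rule sum.reindex_bij_betw)
  also have "\<dots> = of_nat (card ({..level n E v} \<inter> {j. P j}))"
    by simp
  finally show ?thesis .
qed

lemma count_mod:
  assumes m: "(m::nat) > 0"
  shows "card ({..<d} \<inter> {j. j mod m = m - 1}) = d div m"
proof (induction d)
  case 0 then show ?case by simp
next
  case (Suc d)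
  have e: "{..<Suc d} \<inter> {j. j mod m = m - 1} =
     ({..<d} \<inter> {j. j mod m = m - 1}) \<union> (if d mod m = m - 1 then {d} else {})"
    by (auto simp: less_Suc_eq)
  have c: "card ({..<Suc d} \<inter> {j. j mod m = m - 1}) =
     card ({..<d} \<inter> {j. j mod m = m - 1}) + (if d mod m = m - 1 then 1 else 0)"
    unfolding e by (subst card_Un_disjoint) auto
  have "(Suc d mod m = 0) = (d mod m = m - 1)"
  proof -
    have "Suc d mod m = (if Suc (d mod m) = m then 0 else Suc (d mod m))" by (rule mod_Suc)
    moreover have "d mod m < m" using m by simp
    ultimately show ?thesis using m by (cases "Suc (d mod m) = m") auto
  qed
  then show ?case using c Suc.IH div_Suc[of d m] by simp
qed

lemma mod_step:
  fixes d m :: nat assumes m: "m > 0"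
  shows "d mod (m * 2) = d mod m + (if odd (d div m) then m else 0)"
    and "((d mod m = m - 1) \<and> odd (d div m)) = (d mod (m * 2) = m * 2 - 1)"
proof -
  have e: "d mod (m * 2) = m * (d div m mod 2) + d mod m" by (rule mod_mult2_eq)
  have l: "d mod m < m" using m by simp
  show "d mod (m * 2) = d mod m + (if odd (d div m) then m else 0)"
  proof (cases "odd (d div m)")
    case True
    then have "d div m mod 2 = 1" by presburger
    then show ?thesis unfolding e using True by simp
  next
    case False
    then have "d div m mod 2 = 0" by presburger
    then show ?thesis unfolding e using False by simp
  qed
  show "((d mod m = m - 1) \<and> odd (d div m)) = (d mod (m * 2) = m * 2 - 1)"
  proof (cases "odd (d div m)")
    case True
    then have "d div m mod 2 = 1" by presburger
    then show ?thesis unfolding e using True l m by (simp; arith)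
  next
    case False
    then have "d div m mod 2 = 0" by presburger
    then show ?thesis unfolding e using False l m by (simp; arith)
  qed
qed

lemma run_inv:
  assumes B: "branching n E"
  shows "run (matvec n (adj_closure n E)) i (\<lambda>_. 0, \<lambda>_. 1, 0) = (lvl, q, c) \<Longrightarrow>
    c = i \<and> (\<forall>v<n. lvl v = level n E v mod 2 ^ i \<and>
       q v = of_bool (level n E v mod 2 ^ i = 2 ^ i - 1))"
proof (induction i arbitrary: lvl q c)
  case 0
  then show ?case by auto
next
  case (Suc i)
  let ?orc = "matvec n (adj_closure n E)"
  obtain lvl' q' c' where r: "run ?orc i (\<lambda>_. 0, \<lambda>_. 1, 0) = (lvl', q', c')"
    by (metis prod_cases3)
  note IH = Suc.IH[OF r]
  define m :: nat where "m = 2 ^ i"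
  have m: "m > 0" unfolding m_def by simp
  have m2: "(2::nat) ^ Suc i = m * 2" unfolding m_def by simp
  have st: "lvl = (\<lambda>v. lvl' v + (if ?orc q' v + q' v = 1 then 2 ^ i else 0))"
           "q = (\<lambda>v. q' v * (?orc q' v + q' v))" "c = Suc c'"
    using Suc.prems r by (auto simp: Let_def)
  have rv: "?orc q' v + q' v = of_bool (odd (level n E v div m))" if v: "v < n" for v
  proof -
    let ?d = "level n E v"
    have "?orc q' v = of_nat (card ({..?d} \<inter> {j. j mod m = m - 1}))"
      by (rule matvec_level[OF B v]) (use IH m_def in auto)
    also have "{..?d} \<inter> {j. j mod m = m - 1} =
        ({..<?d} \<inter> {j. j mod m = m - 1}) \<union> (if ?d mod m = m - 1 then {?d} else {})"
      by (auto simp: le_less)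
    also have "card \<dots> = ?d div m + (if ?d mod m = m - 1 then 1 else 0)"
      using count_mod[OF m, of ?d] by (subst card_Un_disjoint) auto
    finally have o: "?orc q' v = of_nat (?d div m + (if ?d mod m = m - 1 then 1 else 0))" .
    have qv: "q' v = of_bool (?d mod m = m - 1)" using IH v m_def by auto
    show ?thesis unfolding o qv
      by (cases "?d mod m = m - 1") (auto simp: of_nat_bit)
  qed
  show ?case
  proof (intro conjI allI impI)
    show "c = Suc i" using st IH by simp
  next
    fix v assume v: "v < n"
    show "lvl v = level n E v mod 2 ^ Suc i"
      unfolding st(1) m2 mod_step(1)[OF m] using rv[OF v] IH v m_def by auto
    show "q v = of_bool (level n E v mod 2 ^ Suc i = 2 ^ Suc i - 1)"
      unfolding st(2) m2 mod_step(2)[OF m, symmetric] using rv[OF v] IH v m_def by auto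
  qed
qed

lemma level_lt:
  assumes B: "branching n E" and v: "v < n" shows "level n E v < n"
proof -
  have "card {u. (u, v) \<in> E\<^sup>*} = card {..level n E v}"
    using anc_bij[OF B level_has[OF B v]] by (rule bij_betw_same_card)
  moreover have "card {u. (u, v) \<in> E\<^sup>*} \<le> card {..<n}"
    using anc_sub[OF B v] by (intro card_mono) auto
  ultimately show ?thesis by simp
qed

lemma n_le_pow:
  assumes "0 < n" shows "n \<le> 2 ^ nat \<lceil>log 2 (real n)\<rceil>"
proof -
  have "real n = 2 powr (log 2 (real n))" using assms by simp
  also have "\<dots> \<le> 2 powr real (nat \<lceil>log 2 (real n)\<rceil>)"
    by (intro powr_mono) (auto intro: real_nat_ceiling_ge)
  also have "\<dots> = 2 ^ nat \<lceil>log 2 (real n)\<rceil>" by (simp add: powr_realpow)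
  finally show ?thesis by (metis of_nat_le_iff of_nat_numeral of_nat_power)
qed

theorem lemma21:
  fixes n :: nat and E :: "(nat \<times> nat) set"
  assumes "branching n E"
  shows "case procedure (matvec n (adj_closure n E)) n of (lvl, q, c) \<Rightarrow>
           c \<le> nat \<lceil>log 2 (real n)\<rceil> \<and> (\<forall>v<n. lvl v = level n E v)"
proof -
  obtain lvl q c where r: "procedure (matvec n (adj_closure n E)) n = (lvl, q, c)"
    by (metis prod_cases3)
  note I = run_inv[OF assms r[unfolded procedure_def]]
  have "\<forall>v<n. lvl v = level n E v"
  proof (intro allI impI)
    fix v assume v: "v < n"
    have "level n E v < 2 ^ nat \<lceil>log 2 (real n)\<rceil>"
      using level_lt[OF assms v] n_le_pow[of n] v by linarith
    then show "lvl v = level n E v" using I v by simp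
  qed
  then show ?thesis using r I by simp
qed

end
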